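(* There exists a family $\mathcal{E}\subset\mathcal{T}$ with $|\mathcal{E}|=\mathfrak{c}$ such that each space $(\mathbb{R},\tau)$, $\tau\in\mathcal{E}$, is connected, separable and completely metrizable, and the spaces $(\mathbb{R},\tau)$, $\tau\in\mathcal{E}$, are incomparable.
   Context: $\eta$ denotes the Euclidean topology on $\mathbb{R}$; $\mathcal{T}$ is the family of all topologies on $\mathbb{R}$ finer than $\eta$. Topological spaces $X_i$ ($i\in I$) are incomparable if, for all $i,j\in I$, whenever $X_i$ is homeomorphic to a subspace $S_j$ of $X_j$, then $i=j$ and $S_j=X_j$. $\mathfrak{c}=2^{\aleph_0}$. *)

theory Defs
  imports "HOL-Analysis.Analysis" "HOL-Library.Equipollence"
begin

definition finer_than_euclidean :: "real topology \<Rightarrow> bool" where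
  "finer_than_euclidean \<tau> \<longleftrightarrow> topspace \<tau> = UNIV \<and>
     (\<forall>U. openin euclideanreal U \<longrightarrow> openin \<tau> U)"

definition incomparable_family :: "'i set \<Rightarrow> ('i \<Rightarrow> 'a topology) \<Rightarrow> bool" where
  "incomparable_family I X \<longleftrightarrow>
     (\<forall>i\<in>I. \<forall>j\<in>I. \<forall>S. S \<subseteq> topspace (X j) \<and> X i homeomorphic_space subtopology (X j) S
        \<longrightarrow> i = j \<and> S = topspace (X j))"

end

theory Submission
  imports Defs
begin


definition Lb :: "nat set \<Rightarrow> int \<Rightarrow> bool" where
  "Lb A n \<longleftrightarrow> n \<le> 1 \<or> (n \<ge> 2 \<and> nat (n - 2) \<in> A)"
definition Rb :: "nat set \<Rightarrow> int \<Rightarrow> bool" where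
  "Rb A n \<longleftrightarrow> n = 0 \<or> (n \<ge> 2 \<and> nat (n - 2) \<notin> A)"

definition g1 :: "nat set \<Rightarrow> real \<Rightarrow> real" where
  "g1 A y = (if Rb A \<lfloor>y\<rfloor> then sin (pi / (y - of_int \<lfloor>y\<rfloor>)) else 0)"
definition g2 :: "nat set \<Rightarrow> real \<Rightarrow> real" where
  "g2 A y = (if Lb A (\<lfloor>y\<rfloor> + 1) then sin (pi / (of_int \<lfloor>y\<rfloor> + 1 - y)) else 0)"

definition phi :: "nat set \<Rightarrow> real \<Rightarrow> real \<times> real \<times> real" where
  "phi A x = (x, g1 A x, g2 A x)"

definition tau :: "nat set \<Rightarrow> real topology" where
  "tau A = pullback_topology UNIV (phi A) euclidean"

lemma topspace_tau [simp]: "topspace (tau A) = UNIV"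
  by (simp add: tau_def topspace_pullback_topology)

lemma openin_tau: "openin (tau A) U \<longleftrightarrow> (\<exists>V. open V \<and> U = phi A -` V)"
  by (simp add: tau_def openin_pullback_topology)

lemma tau_finer: "finer_than_euclidean (tau A)"
  unfolding finer_than_euclidean_def
proof (intro conjI allI impI)
  fix U assume "openin euclideanreal U"
  then have "open (U \<times> (UNIV :: (real\<times>real) set))" by (simp add: open_Times)
  moreover have "U = phi A -` (U \<times> UNIV)" by (auto simp: phi_def)
  ultimately show "openin (tau A) U" unfolding openin_tau by blast
qed simp

lemma phi_inj: "inj (phi A)"
  by (auto simp: inj_def phi_def)

lemma phi_homeo: "homeomorphic_map (tau A) (top_of_set (range (phi A))) (phi A)"
proof -
  have c1: "continuous_map (tau A) (top_of_set (range (phi A))) (phi A)"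
    unfolding continuous_map_in_subtopology
  proof
    show "continuous_map (tau A) euclidean (phi A)"
      unfolding tau_def
      using continuous_map_pullback[of euclidean euclidean id UNIV "phi A"] by simp
  qed auto
  have c2: "continuous_map (top_of_set (range (phi A))) (tau A) fst"
    unfolding tau_def
  proof (rule continuous_map_pullback')
    show "continuous_map (top_of_set (range (phi A))) euclidean (phi A \<circ> fst)"
      by (rule continuous_map_eq[OF continuous_map_id_subt]) (auto simp: phi_def)
  qed auto
  have "homeomorphic_maps (tau A) (top_of_set (range (phi A))) (phi A) fst"
    unfolding homeomorphic_maps_def using c1 c2 by (auto simp: phi_def)
  then show ?thesis using homeomorphic_map_maps by blast
qed



lemma floor_in_unit: "of_int n < y \<Longrightarrow> y < of_int n + 1 \<Longrightarrow> \<lfloor>y::real\<rfloor> = n"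
  by (simp add: floor_eq_iff)

lemma phi_on_unit:
  assumes "of_int n < y" "y < of_int n + 1"
  shows "phi A y = (y, (if Rb A n then sin (pi / (y - of_int n)) else 0),
                       (if Lb A (n + 1) then sin (pi / (of_int n + 1 - y)) else 0))"
  using floor_in_unit[OF assms] by (simp add: phi_def g1_def g2_def)

lemma phi_int: "phi A (of_int n) = (of_int n, 0, 0)"
  by (simp add: phi_def g1_def g2_def)

lemma cont_on_unit: "continuous_on {of_int n <..< of_int n + 1} (phi A)"
proof -
  have "continuous_on {of_int n <..< of_int n + 1}
     (\<lambda>y::real. (y, (if Rb A n then sin (pi / (y - of_int n)) else 0),
                       (if Lb A (n + 1) then sin (pi / (of_int n + 1 - y)) else 0)))"
    by (cases "Rb A n"; cases "Lb A (n + 1)"; simp; intro continuous_intros; auto)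
  then show ?thesis
    by (rule continuous_on_cong[THEN iffD1, rotated 2]) (auto simp: phi_on_unit)
qed

lemma isCont_phi: "x \<notin> \<int> \<Longrightarrow> isCont (phi A) x"
proof -
  assume x: "x \<notin> \<int>"
  have "of_int \<lfloor>x\<rfloor> \<noteq> x" using x by (metis Ints_of_int)
  then have "x \<in> {of_int \<lfloor>x\<rfloor> <..< of_int \<lfloor>x\<rfloor> + 1}"
    by (simp add: order_le_neq_trans[OF of_int_floor_le] del: of_int_floor_le)
  moreover have "open {of_int \<lfloor>x\<rfloor> <..< of_int \<lfloor>x\<rfloor> + 1 :: real}" by simp
  ultimately show ?thesis
    using cont_on_unit[of "\<lfloor>x\<rfloor>" A] continuous_on_eq_continuous_at
    by blast
qed



definition sgood :: "real topology \<Rightarrow> real \<Rightarrow> real \<Rightarrow> bool" where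
  "sgood T s x \<longleftrightarrow> (\<forall>U. openin T U \<and> x \<in> U \<longrightarrow>
      (\<exists>e>0. \<forall>y. 0 \<le> s * (x - y) \<and> s * (x - y) < e \<longrightarrow> y \<in> U))"

lemma sgood_left:
  assumes "(phi A \<longlongrightarrow> phi A x) (at_left x)"
  shows "sgood (tau A) 1 x"
  unfolding sgood_def openin_tau
proof (intro allI impI)
  fix U assume "(\<exists>V. open V \<and> U = phi A -` V) \<and> x \<in> U"
  then obtain V where V: "open V" "U = phi A -` V" "phi A x \<in> V" by auto
  have "eventually (\<lambda>y. phi A y \<in> V) (at_left x)"
    using topological_tendstoD[OF assms V(1) V(3)] .
  then obtain b where b: "b < x" "\<And>y. y > b \<Longrightarrow> y < x \<Longrightarrow> phi A y \<in> V"
    unfolding eventually_at_left_field by blast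
  show "\<exists>e>0. \<forall>y. 0 \<le> 1 * (x - y) \<and> 1 * (x - y) < e \<longrightarrow> y \<in> U"
  proof (intro exI[of _ "x - b"] conjI allI impI)
    fix y assume "0 \<le> 1 * (x - y) \<and> 1 * (x - y) < x - b"
    then show "y \<in> U" using b V by (cases "y = x") auto
  qed (use b in auto)
qed

lemma sgood_right:
  assumes "(phi A \<longlongrightarrow> phi A x) (at_right x)"
  shows "sgood (tau A) (-1) x"
  unfolding sgood_def openin_tau
proof (intro allI impI)
  fix U assume "(\<exists>V. open V \<and> U = phi A -` V) \<and> x \<in> U"
  then obtain V where V: "open V" "U = phi A -` V" "phi A x \<in> V" by auto
  have "eventually (\<lambda>y. phi A y \<in> V) (at_right x)"
    using topological_tendstoD[OF assms V(1) V(3)] .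
  then obtain b where b: "b > x" "\<And>y. y > x \<Longrightarrow> y < b \<Longrightarrow> phi A y \<in> V"
    unfolding eventually_at_right_field by blast
  show "\<exists>e>0. \<forall>y. 0 \<le> -1 * (x - y) \<and> -1 * (x - y) < e \<longrightarrow> y \<in> U"
  proof (intro exI[of _ "b - x"] conjI allI impI)
    fix y assume "0 \<le> -1 * (x - y) \<and> -1 * (x - y) < b - x"
    then show "y \<in> U" using b V by (cases "y = x") auto
  qed (use b in auto)
qed

lemma nonint_good:
  assumes "x \<notin> \<int>"
  shows "sgood (tau A) 1 x" "sgood (tau A) (-1) x"
proof -
  have c: "(phi A \<longlongrightarrow> phi A x) (at x)" using isCont_phi[OF assms] by (simp add: isCont_def)
  show "sgood (tau A) 1 x"
    by (rule sgood_left, rule tendsto_mono[OF _ c]) (simp add: at_le)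
  show "sgood (tau A) (-1) x"
    by (rule sgood_right, rule tendsto_mono[OF _ c]) (simp add: at_le)
qed

lemma int_left_good:
  assumes "\<not> Lb A n"
  shows "sgood (tau A) 1 (of_int n)"
proof (rule sgood_left)
  let ?k = "\<lambda>y::real. (y, (if Rb A (n - 1) then sin (pi / (y - of_int (n - 1))) else 0), 0::real)"
  have kc: "isCont ?k (of_int n)"
    by (cases "Rb A (n - 1)"; simp; intro continuous_intros; simp)
  have tt: "(?k \<longlongrightarrow> ?k (of_int n)) (at_left (of_int n))"
    by (rule tendsto_mono[OF at_le[OF subset_UNIV] kc[unfolded isCont_def]])
  have keq: "?k (of_int n) = phi A (of_int n)" by (simp add: phi_int)
  have ev: "eventually (\<lambda>y. ?k y = phi A y) (at_left (of_int n))"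
  proof -
    have "eventually (\<lambda>y. y \<in> {of_int (n - 1) <..< of_int n}) (at_left (real_of_int n))"
      by (rule eventually_at_left_real) simp
    then show ?thesis
    proof (rule eventually_mono)
      fix y assume "y \<in> {real_of_int (n - 1)<..<real_of_int n}"
      then show "?k y = phi A y"
        using phi_on_unit[of "n - 1" y A] assms by simp
    qed
  qed
  show "(phi A \<longlongrightarrow> phi A (of_int n)) (at_left (of_int n))"
    by (rule Lim_transform_eventually[OF tt[unfolded keq] ev])
qed

lemma int_right_good:
  assumes "\<not> Rb A n"
  shows "sgood (tau A) (-1) (of_int n)"
proof (rule sgood_right)
  let ?k = "\<lambda>y::real. (y, 0::real, (if Lb A (n + 1) then sin (pi / (of_int n + 1 - y)) else 0))"
  have kc: "isCont ?k (of_int n)"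
    by (cases "Lb A (n + 1)"; simp; intro continuous_intros; simp)
  have tt: "(?k \<longlongrightarrow> ?k (of_int n)) (at_right (of_int n))"
    by (rule tendsto_mono[OF at_le[OF subset_UNIV] kc[unfolded isCont_def]])
  have keq: "?k (of_int n) = phi A (of_int n)" by (simp add: phi_int)
  have ev: "eventually (\<lambda>y. ?k y = phi A y) (at_right (of_int n))"
  proof -
    have "eventually (\<lambda>y. y \<in> {of_int n <..< of_int n + 1}) (at_right (real_of_int n))"
      by (rule eventually_at_right_real) simp
    then show ?thesis
    proof (rule eventually_mono)
      fix y assume "y \<in> {real_of_int n<..<real_of_int n + 1}"
      then show "?k y = phi A y"
        using phi_on_unit[of n y A] assms by simp
    qed
  qed
  show "(phi A \<longlongrightarrow> phi A (of_int n)) (at_right (of_int n))"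
    by (rule Lim_transform_eventually[OF tt[unfolded keq] ev])
qed



lemma sin_key0: "sin (pi * (4 * real m + 1) / 2) = 1"
proof -
  have "sin (pi * (4 * real m + 1) / 2) = sin (pi / 2 + 2 * real m * pi)"
    by (rule arg_cong[where f=sin]) (simp add: field_simps)
  also have "\<dots> = 1" by (simp only: sin_add sin_2npi cos_2npi) simp
  finally show ?thesis .
qed

lemma sin_key: "sin (pi / (2 / (4 * real m + 1))) = 1"
  using sin_key0[of m] by simp

lemma small_witness:
  assumes "e > 0"
  obtains m :: nat where "2 / (4 * real m + 1) < e" "2 / (4 * real m + 1) < 1"
proof -
  obtain m :: nat where m: "real m > 1 / e + 1" using reals_Archimedean2 by blast
  have "1 / e < real m" using m by linarith
  then have "1 < real m * e" using assms by (simp add: field_simps)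
  then have "2 < (4 * real m + 1) * e" using assms by (simp add: algebra_simps)
  then have "2 / (4 * real m + 1) < e" by (simp add: divide_less_eq mult.commute)
  moreover have "2 / (4 * real m + 1) < 1" using m assms
    by (simp add: divide_less_eq) (smt (verit) divide_pos_pos)
  ultimately show ?thesis using that by blast
qed

lemma int_left_bad:
  assumes "Lb A n"
  shows "\<not> sgood (tau A) 1 (of_int n)"
proof
  assume g: "sgood (tau A) 1 (of_int n)"
  let ?V = "(UNIV::real set) \<times> (UNIV::real set) \<times> {-1/2 <..< 1/2::real}"
  have "open ?V" by (intro open_Times) auto
  then have "openin (tau A) (phi A -` ?V)" unfolding openin_tau by blast
  moreover have "of_int n \<in> phi A -` ?V" by (simp add: phi_int)
  ultimately obtain e where e: "e > 0" "\<And>y. 0 \<le> 1 * (of_int n - y) \<and> 1 * (of_int n - y) < e \<Longrightarrow> y \<in> phi A -` ?V"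
    using g unfolding sgood_def by blast
  obtain m :: nat where m: "2 / (4 * real m + 1) < e" "2 / (4 * real m + 1) < 1"
    using small_witness[OF e(1)] by blast
  define y where "y = of_int n - 2 / (4 * real m + 1)"
  have pos: "0 < 2 / (4 * real m + 1)" by simp
  have "y \<in> phi A -` ?V" using e(2)[of y] m pos by (simp add: y_def)
  moreover have "phi A y = (y, g1 A y, 1)"
  proof -
    have "of_int (n - 1) < y" "y < of_int (n - 1) + 1" using m pos by (auto simp: y_def)
    from phi_on_unit[OF this, of A] have "g2 A y = sin (pi / (of_int (n - 1) + 1 - y))"
      using assms by (simp add: phi_def)
    also have "of_int (n - 1) + 1 - y = 2 / (4 * real m + 1)" by (simp add: y_def)
    finally show ?thesis by (simp add: phi_def sin_key sin_key0)
  qed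
  ultimately show False by simp
qed

lemma int_right_bad:
  assumes "Rb A n"
  shows "\<not> sgood (tau A) (-1) (of_int n)"
proof
  assume g: "sgood (tau A) (-1) (of_int n)"
  let ?V = "(UNIV::real set) \<times> {-1/2 <..< 1/2::real} \<times> (UNIV::real set)"
  have "open ?V" by (intro open_Times) auto
  then have "openin (tau A) (phi A -` ?V)" unfolding openin_tau by blast
  moreover have "of_int n \<in> phi A -` ?V" by (simp add: phi_int)
  ultimately obtain e where e: "e > 0" "\<And>y. 0 \<le> -1 * (of_int n - y) \<and> -1 * (of_int n - y) < e \<Longrightarrow> y \<in> phi A -` ?V"
    using g unfolding sgood_def by blast
  obtain m :: nat where m: "2 / (4 * real m + 1) < e" "2 / (4 * real m + 1) < 1"
    using small_witness[OF e(1)] by blast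
  define y where "y = of_int n + 2 / (4 * real m + 1)"
  have pos: "0 < 2 / (4 * real m + 1)" by simp
  have "y \<in> phi A -` ?V" using e(2)[of y] m pos by (simp add: y_def)
  moreover have "phi A y = (y, 1, g2 A y)"
  proof -
    have "of_int n < y" "y < of_int n + 1" using m pos by (auto simp: y_def)
    from phi_on_unit[OF this, of A] have "g1 A y = sin (pi / (y - of_int n))"
      using assms by (simp add: phi_def)
    also have "y - of_int n = 2 / (4 * real m + 1)" by (simp add: y_def)
    finally show ?thesis by (simp add: phi_def sin_key sin_key0)
  qed
  ultimately show False by simp
qed

lemma tau_left_good_iff: "sgood (tau A) 1 x \<longleftrightarrow> \<not> (x \<in> \<int> \<and> Lb A \<lfloor>x\<rfloor>)"
proof (cases "x \<in> \<int>")
  case True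
  then obtain n where x: "x = of_int n" by (auto elim: Ints_cases)
  then show ?thesis using int_left_bad[of A n] int_left_good[of A n] by auto
qed (simp add: nonint_good)

lemma tau_right_good_iff: "sgood (tau A) (-1) x \<longleftrightarrow> \<not> (x \<in> \<int> \<and> Rb A \<lfloor>x\<rfloor>)"
proof (cases "x \<in> \<int>")
  case True
  then obtain n where x: "x = of_int n" by (auto elim: Ints_cases)
  then show ?thesis using int_right_bad[of A n] int_right_good[of A n] by auto
qed (simp add: nonint_good)



lemma inv_seq: "(\<lambda>m. inverse (real (Suc (Suc m)))) \<longlonglongrightarrow> 0"
  using LIMSEQ_Suc[OF LIMSEQ_inverse_real_of_nat] .

lemma inv_seq_bounds: "0 < inverse (real (Suc (Suc m)))" "inverse (real (Suc (Suc m))) < 1"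
  by (auto simp: inverse_less_1_iff)

lemma sin_inv_seq: "sin (pi / inverse (real (Suc (Suc m)))) = 0"
proof -
  have "pi / inverse (real (Suc (Suc m))) = pi * real (Suc (Suc m))" by (simp add: divide_inverse)
  then show ?thesis by (simp only: sin_npi2)
qed

lemma sin_inv_seq2: "sin (pi / inverse (2 + real m)) = 0"
  using sin_inv_seq[of m] by simp

lemma cl_right_int:
  assumes "e > 0"
  shows "phi A (of_int n) \<in> closure (phi A ` {of_int n <..< of_int n + e})"
proof -
  define y where "y m = of_int n + inverse (real (Suc (Suc m)))" for m
  let ?k2 = "\<lambda>y::real. (if Lb A (n + 1) then sin (pi / (of_int n + 1 - y)) else 0)"
  have ty: "y \<longlonglongrightarrow> of_int n"
    unfolding y_def using tendsto_add[OF tendsto_const inv_seq, of "of_int n"] by simp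
  have kc: "isCont ?k2 (of_int n)"
    by (cases "Lb A (n + 1)"; simp; intro continuous_intros; simp)
  have tk: "(\<lambda>m. ?k2 (y m)) \<longlonglongrightarrow> ?k2 (of_int n)"
    by (rule isCont_tendsto_compose[OF kc ty])
  have eq: "phi A (y m) = (y m, 0, ?k2 (y m))" for m
  proof -
    have "of_int n < y m" "y m < of_int n + 1" using inv_seq_bounds[of m] by (auto simp: y_def)
    from phi_on_unit[OF this, of A] show ?thesis
      by (simp add: y_def sin_inv_seq2)
  qed
  have "(\<lambda>m. phi A (y m)) \<longlonglongrightarrow> (of_int n, 0, ?k2 (of_int n))"
    unfolding eq by (intro tendsto_Pair ty tendsto_const tk)
  moreover have "?k2 (of_int n) = 0" by simp
  ultimately have t: "(\<lambda>m. phi A (y m)) \<longlonglongrightarrow> phi A (of_int n)" by (simp add: phi_int)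
  have "eventually (\<lambda>m. y m < of_int n + e) sequentially"
    using order_tendstoD(2)[OF ty, of "of_int n + e"] assms by simp
  then have "eventually (\<lambda>m. phi A (y m) \<in> closure (phi A ` {of_int n <..< of_int n + e})) sequentially"
  proof (rule eventually_mono)
    fix m assume "y m < of_int n + e"
    moreover have "of_int n < y m" using inv_seq_bounds[of m] by (auto simp: y_def)
    ultimately show "phi A (y m) \<in> closure (phi A ` {of_int n <..< of_int n + e})"
      using closure_subset by fastforce
  qed
  then show ?thesis
    using Lim_in_closed_set[OF closed_closure _ trivial_limit_sequentially t] by blast
qed

lemma cl_left_int:
  assumes "e > 0"
  shows "phi A (of_int n) \<in> closure (phi A ` {of_int n - e <..< of_int n})"
proof -
  define y where "y m = of_int n - inverse (real (Suc (Suc m)))" for m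
  let ?k1 = "\<lambda>y::real. (if Rb A (n - 1) then sin (pi / (y - of_int (n - 1))) else 0)"
  have ty: "y \<longlonglongrightarrow> of_int n"
    unfolding y_def using tendsto_diff[OF tendsto_const inv_seq, of "of_int n"] by simp
  have kc: "isCont ?k1 (of_int n)"
    by (cases "Rb A (n - 1)"; simp; intro continuous_intros; simp)
  have tk: "(\<lambda>m. ?k1 (y m)) \<longlonglongrightarrow> ?k1 (of_int n)"
    by (rule isCont_tendsto_compose[OF kc ty])
  have eq: "phi A (y m) = (y m, ?k1 (y m), 0)" for m
  proof -
    have "of_int (n - 1) < y m" "y m < of_int (n - 1) + 1" using inv_seq_bounds[of m] by (auto simp: y_def)
    from phi_on_unit[OF this, of A] show ?thesis
      by (simp add: y_def sin_inv_seq2)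
  qed
  have "(\<lambda>m. phi A (y m)) \<longlonglongrightarrow> (of_int n, ?k1 (of_int n), 0)"
    unfolding eq by (intro tendsto_Pair ty tendsto_const tk)
  moreover have "?k1 (of_int n) = 0" by simp
  ultimately have t: "(\<lambda>m. phi A (y m)) \<longlonglongrightarrow> phi A (of_int n)" by (simp add: phi_int)
  have "eventually (\<lambda>m. y m > of_int n - e) sequentially"
    using order_tendstoD(1)[OF ty, of "of_int n - e"] assms by simp
  then have "eventually (\<lambda>m. phi A (y m) \<in> closure (phi A ` {of_int n - e <..< of_int n})) sequentially"
  proof (rule eventually_mono)
    fix m assume "y m > of_int n - e"
    moreover have "y m < of_int n" using inv_seq_bounds[of m] by (auto simp: y_def)
    ultimately show "phi A (y m) \<in> closure (phi A ` {of_int n - e <..< of_int n})"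
      using closure_subset by fastforce
  qed
  then show ?thesis
    using Lim_in_closed_set[OF closed_closure _ trivial_limit_sequentially t] by blast
qed

lemma cl_right:
  assumes "e > 0"
  shows "phi A x \<in> closure (phi A ` {x <..< x + e})"
proof (cases "x \<in> \<int>")
  case True
  then obtain n where "x = of_int n" by (auto elim: Ints_cases)
  then show ?thesis using cl_right_int[OF assms] by simp
next
  case False
  have "(phi A \<longlongrightarrow> phi A x) (at x)"
    using isCont_phi[OF False] by (simp add: isCont_def)
  then have "(phi A \<longlongrightarrow> phi A x) (at_right x)"
    by (rule tendsto_mono[OF at_le[OF subset_UNIV]])
  moreover have "eventually (\<lambda>y. y \<in> {x <..< x + e}) (at_right x)"
    by (rule eventually_at_right_real) (use assms in simp)
  then have "eventually (\<lambda>y. phi A y \<in> closure (phi A ` {x <..< x + e})) (at_right x)"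
    by (rule eventually_mono) (use closure_subset in fastforce)
  ultimately show ?thesis
    using Lim_in_closed_set[OF closed_closure] trivial_limit_at_right_real by blast
qed

lemma cl_left:
  assumes "e > 0"
  shows "phi A x \<in> closure (phi A ` {x - e <..< x})"
proof (cases "x \<in> \<int>")
  case True
  then obtain n where "x = of_int n" by (auto elim: Ints_cases)
  then show ?thesis using cl_left_int[OF assms] by simp
next
  case False
  have "(phi A \<longlongrightarrow> phi A x) (at x)"
    using isCont_phi[OF False] by (simp add: isCont_def)
  then have "(phi A \<longlongrightarrow> phi A x) (at_left x)"
    by (rule tendsto_mono[OF at_le[OF subset_UNIV]])
  moreover have "eventually (\<lambda>y. y \<in> {x - e <..< x}) (at_left x)"
    by (rule eventually_at_left_real) (use assms in simp)
  then have "eventually (\<lambda>y. phi A y \<in> closure (phi A ` {x - e <..< x})) (at_left x)"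
    by (rule eventually_mono) (use closure_subset in fastforce)
  ultimately show ?thesis
    using Lim_in_closed_set[OF closed_closure] trivial_limit_at_left_real by blast
qed



lemma conn_piece:
  assumes uv: "u < v" and noint: "\<And>z. z \<in> \<int> \<Longrightarrow> z \<le> u \<or> z \<ge> v"
  shows "connected (phi A ` {u..v})"
proof -
  let ?n = "\<lfloor>u\<rfloor>"
  have v1: "of_int ?n + 1 \<ge> v"
  proof -
    have i: "of_int (?n + 1) \<in> (\<int>::real set)" by (rule Ints_of_int)
    have u1: "u < of_int (?n + 1)" by (subst floor_less_iff[symmetric]) simp
    have "of_int (?n + 1) \<le> u \<or> of_int (?n + 1) \<ge> v" by (rule noint[OF i])
    then have "of_int (?n + 1) \<ge> v" using u1 leD by blast
    then show ?thesis by simp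
  qed
  have n0: "of_int ?n \<le> u" by (rule of_int_floor_le)
  have sub: "{u<..<v} \<subseteq> {of_int ?n <..< of_int ?n + 1}"
  proof
    fix x assume "x \<in> {u<..<v}"
    then have ux: "u < x" "x < v" by auto
    have "of_int ?n < x" using n0 ux(1) by (rule le_less_trans)
    moreover have "x < of_int ?n + 1" using ux(2) v1 by (rule less_le_trans)
    ultimately show "x \<in> {of_int ?n <..< of_int ?n + 1}" by simp
  qed
  have c: "continuous_on {u<..<v} (phi A)"
    by (rule continuous_on_subset[OF cont_on_unit sub])
  have conn: "connected (phi A ` {u<..<v})"
    by (rule connected_continuous_image[OF c connected_Ioo])
  show ?thesis
  proof (rule connected_intermediate_closure[OF conn])
    show "phi A ` {u<..<v} \<subseteq> phi A ` {u..v}" by (rule image_mono) auto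
    show "phi A ` {u..v} \<subseteq> closure (phi A ` {u<..<v})"
    proof
      fix p assume "p \<in> phi A ` {u..v}"
      then obtain x where x: "x \<in> {u..v}" "p = phi A x" by blast
      have ux: "u \<le> x" "x \<le> v" using x(1) by auto
      show "p \<in> closure (phi A ` {u<..<v})"
      proof (cases "x = u")
        case True
        have e: "u + (v - u) = v" by simp
        have "phi A u \<in> closure (phi A ` {u<..<u + (v - u)})" using uv by (intro cl_right) simp
        then show ?thesis unfolding e x(2) True .
      next
        case False1: False
        show ?thesis
        proof (cases "x = v")
          case True
          have e: "v - (v - u) = u" by simp
          have "phi A v \<in> closure (phi A ` {v - (v - u)<..<v})" using uv by (intro cl_left) simp
          then show ?thesis unfolding e x(2) True .
        next
          case False2: False
          have l1: "u < x" using ux(1) False1 by (simp add: less_le)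
          have l2: "x < v" using ux(2) False2 by (simp add: less_le)
          have "x \<in> {u<..<v}" using l1 l2 by simp
          then have "p \<in> phi A ` {u<..<v}" by (rule image_eqI[where f="phi A", OF x(2)])
          then show ?thesis by (rule subsetD[OF closure_subset])
        qed
      qed
    qed
  qed
qed

lemma conn_Icc: "u \<le> v \<Longrightarrow> connected (phi A ` {u..v})"
proof (induction "nat (\<lceil>v\<rceil> - \<lfloor>u\<rfloor>)" arbitrary: u rule: less_induct)
  case less
  show ?case
  proof (cases "u = v")
    case True
    then show ?thesis by simp
  next
    case False
    then have uv: "u < v" using less.prems by simp
    define w where "w = of_int \<lfloor>u\<rfloor> + (1::real)"
    have uw: "u < w" unfolding w_def by linarith
    have gap: "z \<le> u \<or> z \<ge> w" if "z \<in> \<int>" for z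
    proof -
      obtain k where k: "z = of_int k" using \<open>z \<in> \<int>\<close> by (auto elim: Ints_cases)
      show ?thesis
      proof (cases "u < z")
        case True
        then have "\<lfloor>u\<rfloor> < k" using k floor_less_iff by blast
        then show ?thesis unfolding w_def k by linarith
      qed simp
    qed
    show ?thesis
    proof (cases "v \<le> w")
      case True
      show ?thesis
      proof (rule conn_piece[OF uv])
        fix z :: real assume "z \<in> \<int>"
        then show "z \<le> u \<or> z \<ge> v" using gap[of z] True by linarith
      qed
    next
      case False
      have c1: "connected (phi A ` {u..w})"
        by (rule conn_piece[OF uw gap])
      have fw: "\<lfloor>w\<rfloor> = \<lfloor>u\<rfloor> + 1" unfolding w_def by (metis floor_of_int of_int_1 of_int_add)
      have vc: "v \<le> of_int \<lceil>v\<rceil>" by (rule le_of_int_ceiling)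
      have "w < v" using False by (simp only: not_le)
      then have "of_int \<lfloor>u\<rfloor> + 1 < (of_int \<lceil>v\<rceil> :: real)"
        using vc unfolding w_def by (rule less_le_trans)
      then have "\<lfloor>u\<rfloor> + 1 < \<lceil>v\<rceil>" by (metis of_int_1 of_int_add of_int_less_iff)
      then have lt: "nat (\<lceil>v\<rceil> - \<lfloor>w\<rfloor>) < nat (\<lceil>v\<rceil> - \<lfloor>u\<rfloor>)" unfolding fw by simp
      have c2: "connected (phi A ` {w..v})" using less.hyps[OF lt] False by simp
      have "{u..v} = {u..w} \<union> {w..v}" using uw False by auto
      then have eq: "phi A ` {u..v} = phi A ` {u..w} \<union> phi A ` {w..v}" by auto
      have "phi A w \<in> phi A ` {u..w} \<inter> phi A ` {w..v}" using uw False by auto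
      then have ne: "phi A ` {u..w} \<inter> phi A ` {w..v} \<noteq> {}" by blast
      show ?thesis unfolding eq by (rule connected_Un[OF c1 c2 ne])
    qed
  qed
qed

lemma conn_interval:
  assumes "is_interval S"
  shows "connected (phi A ` S)"
  unfolding connected_iff_connected_component
proof (intro ballI)
  have iv: "\<And>a b z. a \<in> S \<Longrightarrow> b \<in> S \<Longrightarrow> a \<le> z \<Longrightarrow> z \<le> b \<Longrightarrow> z \<in> S"
    using assms unfolding is_interval_1 by blast
  fix p q assume "p \<in> phi A ` S" "q \<in> phi A ` S"
  then obtain a b where ab: "a \<in> S" "b \<in> S" "p = phi A a" "q = phi A b" by (metis imageE)
  have key: "connected_component (phi A ` S) (phi A x) (phi A y)"
    if "x \<in> S" "y \<in> S" "x \<le> y" for x y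
  proof -
    have "{x..y} \<subseteq> S"
    proof
      fix z assume "z \<in> {x..y}"
      then have "x \<le> z" "z \<le> y" by auto
      then show "z \<in> S" using iv that(1,2) by blast
    qed
    then have "phi A ` {x..y} \<subseteq> phi A ` S" by (rule image_mono)
    moreover have "phi A x \<in> phi A ` {x..y}" "phi A y \<in> phi A ` {x..y}" using that by auto
    ultimately show ?thesis unfolding connected_component_def
      using conn_Icc[OF \<open>x \<le> y\<close>, of A] by blast
  qed
  show "connected_component (phi A ` S) p q"
  proof (cases "a \<le> b")
    case True then show ?thesis using key ab by simp
  next
    case False
    then have "connected_component (phi A ` S) q p" using key[of b a] ab by simp
    then show ?thesis by (rule connected_component_sym)
  qed
qed

lemma connectedin_tau:
  assumes "is_interval S"
  shows "connectedin (tau A) S"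
proof -
  have "connectedin (top_of_set (range (phi A))) (phi A ` S)"
    unfolding connectedin_subtopology using conn_interval[OF assms] by auto
  then show ?thesis using homeomorphic_map_connectedness[OF phi_homeo, of S A] by simp
qed

lemma connected_tau: "connected_space (tau A)"
proof -
  have "connectedin (tau A) (topspace (tau A))" using connectedin_tau[of UNIV A] by simp
  then show ?thesis by (simp only: connectedin_topspace)
qed



lemma second_countable_euclidean_sc:
  "second_countable (euclidean :: 'a::second_countable_topology topology)"
proof -
  obtain \<B> :: "'a set set" where B: "countable \<B>" "\<And>C. C \<in> \<B> \<Longrightarrow> open C"
       "\<And>S. open S \<Longrightarrow> \<exists>U. U \<subseteq> \<B> \<and> S = \<Union>U"
    using univ_second_countable by blast
  show ?thesis unfolding second_countable_def
  proof (intro exI conjI ballI allI impI)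
    show "countable \<B>" by (rule B(1))
    fix V assume "V \<in> \<B>" then show "openin euclidean V" using B(2) by simp
  next
    fix U :: "'a set" and x assume "openin euclidean U \<and> x \<in> U"
    then obtain W where "W \<subseteq> \<B>" "U = \<Union>W" "x \<in> U" using B(3) by auto
    then show "\<exists>V\<in>\<B>. x \<in> V \<and> V \<subseteq> U" by blast
  qed
qed

lemma separable_tau: "separable_space (tau A)"
proof -
  have "second_countable (top_of_set (range (phi A)))"
    by (rule second_countable_subtopology[OF second_countable_euclidean_sc])
  then have "separable_space (top_of_set (range (phi A)))"
    by (rule second_countable_imp_separable_space)
  then show ?thesis
    using homeomorphic_separable_space[OF homeomorphic_map_imp_homeomorphic_space[OF phi_homeo]]
    by blast
qed

lemma range_phi_eq:
  "range (phi A) = {p. fst p \<notin> \<int> \<and> snd p = snd (phi A (fst p))} \<union> (\<int> \<times> {(0, 0)})"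
proof (intro equalityI subsetI)
  fix p assume "p \<in> range (phi A)"
  then obtain x where x: "p = phi A x" by blast
  show "p \<in> {p. fst p \<notin> \<int> \<and> snd p = snd (phi A (fst p))} \<union> (\<int> \<times> {(0, 0)})"
  proof (cases "x \<in> \<int>")
    case True
    then obtain n where "x = of_int n" by (auto elim: Ints_cases)
    then show ?thesis using x True by (simp add: phi_int)
  next
    case False
    then show ?thesis using x by (simp add: phi_def)
  qed
next
  fix p :: "real \<times> real \<times> real"
  assume p: "p \<in> {p. fst p \<notin> \<int> \<and> snd p = snd (phi A (fst p))} \<union> (\<int> \<times> {(0, 0)})"
  show "p \<in> range (phi A)"
  proof (cases "fst p \<in> \<int>")
    case True
    then obtain n where n: "fst p = of_int n" by (auto elim: Ints_cases)
    then have "p = phi A (of_int n)" using p True by (cases p) (auto simp: phi_int)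
    then show ?thesis by blast
  next
    case False
    then have "p = phi A (fst p)" using p by (cases p) (auto simp: phi_def)
    then show ?thesis by blast
  qed
qed

lemma gdelta_range_phi: "gdelta_in euclidean (range (phi A))"
proof -
  define Oz where "Oz = - (\<int> :: real set)"
  have oO: "open Oz" unfolding Oz_def by (simp add: open_Compl)
  have cphi: "continuous_on Oz (phi A)"
    by (rule continuous_at_imp_continuous_on) (simp add: Oz_def isCont_phi)
  define F where "F p = snd p - snd (phi A (fst p))" for p :: "real \<times> real \<times> real"
  have c1: "continuous_on (Oz \<times> UNIV) (phi A \<circ> fst)"
    by (rule continuous_on_compose[OF continuous_on_fst[OF continuous_on_id]])
       (rule continuous_on_subset[OF cphi], auto)
  have c2: "continuous_on (Oz \<times> UNIV) (\<lambda>x. snd (phi A (fst x)))"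
    using continuous_on_snd[OF c1] by (simp add: o_def)
  have cF: "continuous_on (Oz \<times> UNIV) F"
    unfolding F_def by (intro continuous_intros c2)
  have G1: "{p \<in> Oz \<times> UNIV. F p = 0} = {p. fst p \<notin> \<int> \<and> snd p = snd (phi A (fst p))}"
    by (auto simp: Oz_def F_def)
  have "closedin (top_of_set (Oz \<times> UNIV)) {p \<in> Oz \<times> UNIV. F p = 0}"
    by (rule continuous_closedin_preimage_constant[OF cF])
  then obtain C where C: "closed C" "{p \<in> Oz \<times> UNIV. F p = 0} = (Oz \<times> UNIV) \<inter> C"
    unfolding closedin_closed by blast
  have g1: "gdelta_in euclidean ((Oz \<times> UNIV) \<inter> C)"
  proof (rule gdelta_in_Int)
    show "gdelta_in euclidean (Oz \<times> UNIV)"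
      by (rule open_imp_gdelta_in) (simp add: oO open_Times)
    show "gdelta_in euclidean C"
      by (rule closed_imp_gdelta_in[OF metrizable_space_euclidean]) (simp add: C(1))
  qed
  have g2: "gdelta_in euclidean ((\<int>::real set) \<times> {(0::real, 0::real)})"
    by (rule closed_imp_gdelta_in[OF metrizable_space_euclidean]) (simp add: closed_Times)
  have "range (phi A) = ((Oz \<times> UNIV) \<inter> C) \<union> (\<int> \<times> {(0, 0)})"
    using range_phi_eq[of A] G1 C(2) by simp
  then show ?thesis using gdelta_in_Un[OF g1 g2] by simp
qed

lemma cm_tau: "completely_metrizable_space (tau A)"
proof -
  have "completely_metrizable_space (top_of_set (range (phi A)))"
    by (rule completely_metrizable_space_gdelta_in[OF completely_metrizable_space_euclidean gdelta_range_phi])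
  then show ?thesis
    using homeomorphic_completely_metrizable_space[OF homeomorphic_map_imp_homeomorphic_space[OF phi_homeo]]
    by blast
qed



lemma between_lemma:
  fixes f :: "real \<Rightarrow> real"
  assumes inj: "inj f" and iv: "\<And>a b. a \<le> b \<Longrightarrow> is_interval (f ` {a..b})"
    and ax: "a < x" and xb: "x < b"
  shows "(f a < f x \<and> f x < f b) \<or> (f b < f x \<and> f x < f a)"
proof -
  have mem: "z \<in> f ` {p..q}" if "p \<le> q" "y1 \<in> {p..q}" "y2 \<in> {p..q}" "f y1 \<le> z" "z \<le> f y2" for p q y1 y2 z
  proof -
    have "is_interval (f ` {p..q})" by (rule iv[OF that(1)])
    then have iv1: "\<And>a b z. a \<in> f ` {p..q} \<Longrightarrow> b \<in> f ` {p..q} \<Longrightarrow> a \<le> z \<Longrightarrow> z \<le> b \<Longrightarrow> z \<in> f ` {p..q}"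
      unfolding is_interval_1 by blast
    have m1: "f y1 \<in> f ` {p..q}" using that(2) by (rule imageI)
    have m2: "f y2 \<in> f ` {p..q}" using that(3) by (rule imageI)
    show ?thesis by (rule iv1[OF m1 m2 that(4) that(5)])
  qed
  have nx: "f a \<noteq> f x" "f x \<noteq> f b" "f a \<noteq> f b" using ax xb by (simp_all add: inj_eq[OF inj])
  have A: False if "f x < f a" "f a < f b"
  proof -
    have "f a \<in> f ` {x..b}" by (rule mem[of x b x b]) (use xb that in auto)
    then obtain s where "s \<in> {x..b}" "f a = f s" by auto
    then show False using ax by (simp add: inj_eq[OF inj])
  qed
  have B: False if "f b < f x" "f a < f b"
  proof -
    have "f b \<in> f ` {a..x}" by (rule mem[of a x a x]) (use ax that in auto)
    then obtain s where "s \<in> {a..x}" "f b = f s" by auto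
    then show False using xb by (simp add: inj_eq[OF inj])
  qed
  have C: False if "f a < f x" "f b < f a"
  proof -
    have "f a \<in> f ` {x..b}" by (rule mem[of x b b x]) (use xb that in auto)
    then obtain s where "s \<in> {x..b}" "f a = f s" by auto
    then show False using ax by (simp add: inj_eq[OF inj])
  qed
  have D: False if "f x < f b" "f b < f a"
  proof -
    have "f b \<in> f ` {a..x}" by (rule mem[of a x x a]) (use ax that in auto)
    then obtain s where "s \<in> {a..x}" "f b = f s" by auto
    then show False using xb by (simp add: inj_eq[OF inj])
  qed
  show ?thesis
  proof (cases "f a < f b")
    case True
    have "\<not> f x < f a" using A True by blast
    moreover have "\<not> f b < f x" using B True by blast
    ultimately show ?thesis using nx by linarith
  next
    case False
    then have ba: "f b < f a" using nx by linarith
    have "\<not> f a < f x" using C ba by blast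
    moreover have "\<not> f x < f b" using D ba by blast
    ultimately show ?thesis using nx by linarith
  qed
qed

lemma darboux_inj_mono:
  fixes f :: "real \<Rightarrow> real"
  assumes inj: "inj f" and iv: "\<And>a b. a \<le> b \<Longrightarrow> is_interval (f ` {a..b})"
  shows "(\<forall>x y. x < y \<longrightarrow> f x < f y) \<or> (\<forall>x y. x < y \<longrightarrow> f y < f x)"
proof -
  have T: "(f a < f b \<longleftrightarrow> f b < f c) \<and> (f a < f b \<longleftrightarrow> f a < f c)" if "a < b" "b < c" for a b c
    using between_lemma[OF inj iv that] by linarith
  have key: "f x < f y \<longleftrightarrow> f m < f M" if "m < x" "x < y" "y < M" for x y m M
  proof -
    have "f m < f x \<longleftrightarrow> f x < f y" "f m < f x \<longleftrightarrow> f m < f y" using T[of m x y] that by auto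
    moreover have "f m < f y \<longleftrightarrow> f m < f M" using T[of m y M] that by auto
    ultimately show ?thesis by blast
  qed
  have all: "f x < f y \<longleftrightarrow> f 0 < f 1" if "x < y" for x y
  proof -
    define m where "m = min x 0 - 1"
    define M where "M = max y 1 + 1"
    have "f x < f y \<longleftrightarrow> f m < f M" by (rule key) (use that in \<open>auto simp: m_def M_def\<close>)
    moreover have "f 0 < f 1 \<longleftrightarrow> f m < f M" by (rule key) (auto simp: m_def M_def)
    ultimately show ?thesis by blast
  qed
  show ?thesis
  proof (cases "f 0 < f 1")
    case True then show ?thesis using all by blast
  next
    case False
    have "f y < f x" if "x < y" for x y
    proof -
      have "\<not> f x < f y" using all[OF that] False by blast
      moreover have "f x \<noteq> f y" using that by (simp add: inj_eq[OF inj])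
      ultimately show ?thesis by linarith
    qed
    then show ?thesis by blast
  qed
qed



lemma sign_transfer:
  fixes H :: "real \<Rightarrow> real"
  assumes mono: "\<And>a b. a < b \<Longrightarrow> H a < H b" and s: "s = 1 \<or> s = -1"
  shows "(0 \<le> s * (x - y) \<and> s * (x - y) < s * (x - w)) \<longleftrightarrow>
         (0 \<le> s * (H x - H y) \<and> s * (H x - H y) < s * (H x - H w))"
proof -
  have lt: "H a < H b \<longleftrightarrow> a < b" for a b
    using mono[of a b] mono[of b a] by (cases a b rule: linorder_cases) auto
  have le: "H a \<le> H b \<longleftrightarrow> a \<le> b" for a b
    using lt[of b a] by linarith
  from s show ?thesis
  proof
    assume s1: "s = 1"
    have "(0 \<le> s * (x - y) \<and> s * (x - y) < s * (x - w)) \<longleftrightarrow> (y \<le> x \<and> w < y)"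
      using s1 by auto
    moreover have "(0 \<le> s * (H x - H y) \<and> s * (H x - H y) < s * (H x - H w)) \<longleftrightarrow> (H y \<le> H x \<and> H w < H y)"
      using s1 by auto
    ultimately show ?thesis using le lt by blast
  next
    assume s1: "s = -1"
    have "(0 \<le> s * (x - y) \<and> s * (x - y) < s * (x - w)) \<longleftrightarrow> (x \<le> y \<and> y < w)"
      using s1 by auto
    moreover have "(0 \<le> s * (H x - H y) \<and> s * (H x - H y) < s * (H x - H w)) \<longleftrightarrow> (H x \<le> H y \<and> H y < H w)"
      using s1 by auto
    ultimately show ?thesis using le lt by blast
  qed
qed

lemma between_sign:
  fixes t p q z :: real
  assumes "t = 1 \<or> t = -1" "0 \<le> t * (p - z)" "t * (p - z) < t * (p - q)"
  shows "(q \<le> z \<and> z \<le> p) \<or> (p \<le> z \<and> z \<le> q)"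
  using assms by auto

lemma interval_mem:
  fixes S :: "real set"
  assumes "is_interval S" "a \<in> S" "b \<in> S" "(a \<le> z \<and> z \<le> b) \<or> (b \<le> z \<and> z \<le> a)"
  shows "z \<in> S"
proof -
  have iv1: "\<And>a b z. a \<in> S \<Longrightarrow> b \<in> S \<Longrightarrow> a \<le> z \<Longrightarrow> z \<le> b \<Longrightarrow> z \<in> S"
    using assms(1) unfolding is_interval_1 by blast
  from assms(4) show ?thesis
  proof
    assume "a \<le> z \<and> z \<le> b" then show ?thesis using iv1[OF assms(2,3)] by blast
  next
    assume "b \<le> z \<and> z \<le> a" then show ?thesis using iv1[OF assms(3,2)] by blast
  qed
qed

lemma sq_sign: "s = 1 \<or> s = -1 \<Longrightarrow> s * s = (1::real)"
  by auto



lemma transfer: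
  fixes T1 T2 :: "real topology" and f :: "real \<Rightarrow> real"
  assumes top1: "topspace T1 = UNIV" and fin2: "finer_than_euclidean T2"
    and conn1: "\<And>a b. connectedin T1 {a..b}" and cs1: "connected_space T1"
    and hm: "homeomorphic_map T1 (subtopology T2 S) f"
  shows "\<exists>c. (c = 1 \<or> c = -1) \<and> (\<forall>a b. a < b \<longrightarrow> c * f a < c * f b) \<and> is_interval S \<and>
             range f = S \<and> (\<forall>s x. (s = 1 \<or> s = -1) \<longrightarrow> (sgood T1 s x \<longleftrightarrow> sgood T2 (s * c) (f x)))"
proof -
  have top2: "topspace T2 = UNIV" using fin2 unfolding finer_than_euclidean_def by blast
  have cm: "continuous_map T1 (subtopology T2 S) f" using hm by (rule homeomorphic_imp_continuous_map)
  have injf: "inj f" using homeomorphic_imp_injective_map[OF hm] top1 by simp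
  have rng: "range f = S" using homeomorphic_imp_surjective_map[OF hm] top1 top2 by simp
  have cm2: "continuous_map T1 T2 f" using cm by (simp add: continuous_map_in_subtopology)
  have idc: "continuous_map T2 euclideanreal id"
    unfolding continuous_map_def
  proof (intro conjI allI impI)
    show "id \<in> topspace T2 \<rightarrow> topspace euclideanreal" by simp
    fix U :: "real set" assume "openin euclideanreal U"
    then have "openin T2 U" using fin2 unfolding finer_than_euclidean_def by blast
    moreover have "{x \<in> topspace T2. id x \<in> U} = U" using top2 by simp
    ultimately show "openin T2 {x \<in> topspace T2. id x \<in> U}" by simp
  qed
  have fc: "continuous_map T1 euclideanreal f"
    using continuous_map_compose[OF cm2 idc] by (simp add: o_def)
  have ivs: "is_interval (f ` {a..b})" if "a \<le> b" for a b
  proof -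
    have "connectedin euclideanreal (f ` {a..b})"
      by (rule connectedin_continuous_map_image[OF fc conn1])
    then show ?thesis by (simp add: is_interval_connected_1)
  qed
  have ivS: "is_interval S"
  proof -
    have "connectedin T1 (topspace T1)" using cs1 by (simp add: connectedin_topspace)
    then have "connectedin euclideanreal (f ` topspace T1)"
      by (rule connectedin_continuous_map_image[OF fc])
    then show ?thesis using top1 rng by (simp add: is_interval_connected_1)
  qed
  have pre_open: "openin T1 (f -` V)" if "openin T2 V" for V
  proof -
    have "openin (subtopology T2 S) (S \<inter> V)" using that by (rule openin_subtopology_Int2)
    then have "openin T1 {x \<in> topspace T1. f x \<in> S \<inter> V}"
      by (rule openin_continuous_map_preimage[OF cm])
    moreover have "{x \<in> topspace T1. f x \<in> S \<inter> V} = f -` V" using top1 rng by auto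
    ultimately show ?thesis by simp
  qed
  have img_open: "\<exists>V. openin T2 V \<and> f ` U = V \<inter> S" if "openin T1 U" for U
  proof -
    have "openin (subtopology T2 S) (f ` U)"
      using homeomorphic_imp_open_map[OF hm] that unfolding open_map_def by blast
    then show ?thesis unfolding openin_subtopology by blast
  qed
  obtain c where c: "c = 1 \<or> c = -1" and mono: "\<And>a b. a < b \<Longrightarrow> c * f a < c * f b"
  proof -
    from darboux_inj_mono[OF injf ivs] show ?thesis
    proof
      assume "\<forall>x y. x < y \<longrightarrow> f x < f y" then show ?thesis using that[of 1] by simp
    next
      assume "\<forall>x y. x < y \<longrightarrow> f y < f x" then show ?thesis using that[of "-1"] by simp
    qed
  qed
  let ?H = "\<lambda>t. c * f t"
  have Hm: "\<And>a b. a < b \<Longrightarrow> ?H a < ?H b" by (rule mono)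
  have scid: "s * c * (f x - z) = s * (c * f x - c * z)" for s x z :: real by (simp add: algebra_simps)
  have tr: "sgood T1 s x \<longleftrightarrow> sgood T2 (s * c) (f x)" if s: "s = 1 \<or> s = -1" for s x
  proof
    assume g1: "sgood T1 s x"
    have sc: "s * c = 1 \<or> s * c = -1" using s c by auto
    show "sgood T2 (s * c) (f x)"
      unfolding sgood_def
    proof (intro allI impI)
      fix V assume V: "openin T2 V \<and> f x \<in> V"
      have "openin T1 (f -` V)" using V pre_open by blast
      moreover have "x \<in> f -` V" using V by simp
      ultimately obtain e where e: "e > 0" "\<And>y. 0 \<le> s * (x - y) \<and> s * (x - y) < e \<Longrightarrow> y \<in> f -` V"
        using g1 unfolding sgood_def by blast
      define w where "w = x - s * e / 2"
      have sxw: "s * (x - w) = e / 2" using s by (auto simp: w_def)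
      have "0 \<le> s * (?H x - ?H x) \<and> s * (?H x - ?H x) < s * (?H x - ?H w)"
        using sign_transfer[where H="\<lambda>t. c * f t" and s=s and x=x and y=x and w=w, OF Hm s] sxw e(1) by simp
      then have pos: "0 < s * c * (f x - f w)" by (simp add: scid)
      show "\<exists>e>0. \<forall>z. 0 \<le> s * c * (f x - z) \<and> s * c * (f x - z) < e \<longrightarrow> z \<in> V"
      proof (intro exI[of _ "s * c * (f x - f w)"] conjI allI impI pos)
        fix z assume z: "0 \<le> s * c * (f x - z) \<and> s * c * (f x - z) < s * c * (f x - f w)"
        have "(f w \<le> z \<and> z \<le> f x) \<or> (f x \<le> z \<and> z \<le> f w)"
          using between_sign[OF sc, of "f x" z "f w"] z by blast
        then have "z \<in> S" using interval_mem[OF ivS, of "f w" "f x" z] rng by blast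
        then obtain y where y: "z = f y" using rng by blast
        have "0 \<le> s * (?H x - ?H y) \<and> s * (?H x - ?H y) < s * (?H x - ?H w)"
          using z y by (simp add: scid)
        then have "0 \<le> s * (x - y) \<and> s * (x - y) < s * (x - w)"
          using sign_transfer[where H="\<lambda>t. c * f t" and s=s and x=x and y=y and w=w, OF Hm s] by simp
        then have "y \<in> f -` V" using e sxw by (intro e(2)) simp
        then show "z \<in> V" using y by simp
      qed
    qed
  next
    assume g2: "sgood T2 (s * c) (f x)"
    have sc: "s * c = 1 \<or> s * c = -1" using s c by auto
    show "sgood T1 s x"
      unfolding sgood_def
    proof (intro allI impI)
      fix U assume U: "openin T1 U \<and> x \<in> U"
      then obtain V where V: "openin T2 V" "f ` U = V \<inter> S" using img_open by blast
      have fxV: "f x \<in> V" using U V(2) by blast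
      obtain e where e: "e > 0" "\<And>z. 0 \<le> s * c * (f x - z) \<and> s * c * (f x - z) < e \<Longrightarrow> z \<in> V"
        using g2 V(1) fxV unfolding sgood_def by blast
      define w0 where "w0 = x - s"
      have "s * (x - w0) = 1" using s by (auto simp: w0_def)
      then have "0 \<le> s * (?H x - ?H x) \<and> s * (?H x - ?H x) < s * (?H x - ?H w0)"
        using sign_transfer[where H="\<lambda>t. c * f t" and s=s and x=x and y=x and w=w0, OF Hm s] by simp
      then have d0: "0 < s * c * (f x - f w0)" by (simp add: scid)
      define e1 where "e1 = min e (s * c * (f x - f w0))"
      have e1: "0 < e1" "e1 \<le> e" "e1 \<le> s * c * (f x - f w0)" using e(1) d0 by (auto simp: e1_def)
      define z0 where "z0 = f x - s * c * e1 / 2"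
      have scz0: "s * c * (f x - z0) = e1 / 2"
        using sc by (auto simp: z0_def)
      have "(f w0 \<le> z0 \<and> z0 \<le> f x) \<or> (f x \<le> z0 \<and> z0 \<le> f w0)"
        using between_sign[OF sc, of "f x" z0 "f w0"] scz0 e1 by simp
      then have "z0 \<in> S" using interval_mem[OF ivS, of "f w0" "f x" z0] rng by blast
      then obtain w where w: "z0 = f w" using rng by blast
      have "0 \<le> s * (?H x - ?H x) \<and> s * (?H x - ?H x) < s * (?H x - ?H w)"
        using scz0 w e1(1) by (simp add: scid)
      then have wpos: "0 < s * (x - w)"
        using sign_transfer[where H="\<lambda>t. c * f t" and s=s and x=x and y=x and w=w, OF Hm s] by simp
      show "\<exists>e>0. \<forall>y. 0 \<le> s * (x - y) \<and> s * (x - y) < e \<longrightarrow> y \<in> U"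
      proof (intro exI[of _ "s * (x - w)"] conjI allI impI wpos)
        fix y assume y: "0 \<le> s * (x - y) \<and> s * (x - y) < s * (x - w)"
        then have "0 \<le> s * (?H x - ?H y) \<and> s * (?H x - ?H y) < s * (?H x - ?H w)"
          using sign_transfer[where H="\<lambda>t. c * f t" and s=s and x=x and y=y and w=w, OF Hm s] by simp
        then have "0 \<le> s * c * (f x - f y) \<and> s * c * (f x - f y) < s * c * (f x - f w)"
          by (simp add: scid)
        then have "0 \<le> s * c * (f x - f y) \<and> s * c * (f x - f y) < e"
          using scz0 w e1 by simp
        then have "f y \<in> V" by (rule e(2))
        moreover have "f y \<in> S" using rng by blast
        ultimately have "f y \<in> f ` U" using V(2) by blast
        then show "y \<in> U" using injf by (auto simp: inj_eq)
      qed
    qed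
  qed
  show ?thesis using c mono ivS rng tr by blast
qed



lemma Lb_or_Rb: "Lb A n \<or> Rb A n"
  by (auto simp: Lb_def Rb_def)

lemma both_iff: "Lb A n \<and> Rb A n \<longleftrightarrow> n = 0"
  by (auto simp: Lb_def Rb_def)

lemma Lb_m1: "Lb A (-1)" by (simp add: Lb_def)
lemma not_Rb1: "\<not> Rb A 1" by (simp add: Rb_def)
lemma Lb_code: "Lb A (int k + 2) \<longleftrightarrow> k \<in> A" by (simp add: Lb_def)

lemma int_fix:
  fixes h :: "real \<Rightarrow> real"
  assumes mono: "\<And>a b. a < b \<Longrightarrow> h a < h b" and h0: "h 0 = 0"
    and ints: "\<And>t. t \<in> \<int> \<longleftrightarrow> h t \<in> \<int>"
    and ivl: "\<And>a b z. h a \<le> z \<Longrightarrow> z \<le> h b \<Longrightarrow> \<exists>y. z = h y"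
  shows "h (of_int n) = of_int n"
proof -
  have lt: "h a < h b \<longleftrightarrow> a < b" for a b
    using mono[of a b] mono[of b a] by (cases a b rule: linorder_cases) auto
  have noint: False if yi: "y \<in> \<int>" and y1: "of_int m < y" and y2: "y < of_int m + 1" for y :: real and m :: int
  proof -
    obtain k where k: "y = of_int k" using yi by (auto elim: Ints_cases)
    then have "m < k" "k < m + 1" using y1 y2 by simp_all
    then show False by simp
  qed
  have up: "h (of_int m + 1) = of_int m + 1" if IH: "h (of_int m) = of_int m" for m :: int
  proof -
    have hi: "h (of_int m + 1) \<in> \<int>" using ints[of "of_int m + 1"] by simp
    then obtain k where k: "h (of_int m + 1) = of_int k" by (auto elim: Ints_cases)
    have "h (of_int m) < h (of_int m + 1)" by (rule mono) simp
    then have "m < k" using IH k by simp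
    show ?thesis
    proof (rule ccontr)
      assume "h (of_int m + 1) \<noteq> of_int m + 1"
      then have "m + 1 < k" using \<open>m < k\<close> k by simp
      then have "h (of_int m) \<le> of_int m + 1" "of_int m + 1 \<le> h (of_int m + 1)" using IH k by simp_all
      then obtain y where y: "of_int m + 1 = h y" using ivl by blast
      have "y \<in> \<int>" using ints[of y] y[symmetric] by simp
      moreover have "of_int m < y" using lt[of "of_int m" y] IH y by simp
      moreover have "y < of_int m + 1"
        using lt[of y "of_int m + 1"] y k \<open>m + 1 < k\<close> by simp
      ultimately show False by (rule noint)
    qed
  qed
  have down: "h (of_int m - 1) = of_int m - 1" if IH: "h (of_int m) = of_int m" for m :: int
  proof -
    have hi: "h (of_int m - 1) \<in> \<int>" using ints[of "of_int m - 1"] by simp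
    then obtain k where k: "h (of_int m - 1) = of_int k" by (auto elim: Ints_cases)
    have "h (of_int m - 1) < h (of_int m)" by (rule mono) simp
    then have "k < m" using IH k by simp
    show ?thesis
    proof (rule ccontr)
      assume "h (of_int m - 1) \<noteq> of_int m - 1"
      then have "k < m - 1" using \<open>k < m\<close> k by simp
      then have "h (of_int m - 1) \<le> of_int m - 1" "of_int m - 1 \<le> h (of_int m)" using IH k by simp_all
      then obtain y where y: "of_int m - 1 = h y" using ivl by blast
      have "y \<in> \<int>" using ints[of y] y[symmetric] by simp
      moreover have "of_int m - 1 < y" using lt[of "of_int m - 1" y] y k \<open>k < m - 1\<close> by simp
      moreover have "y < of_int m" using lt[of y "of_int m"] IH y by simp
      ultimately show False using noint[of y "m - 1"] by simp
    qed
  qed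
  have "h (of_nat k) = of_nat k \<and> h (- of_nat k) = - of_nat k" for k :: nat
  proof (induction k)
    case 0 then show ?case using h0 by simp
  next
    case (Suc k)
    have a: "h (of_int (int k)) = of_int (int k)" using Suc by simp
    have b: "h (of_int (- int k)) = of_int (- int k)" using Suc by simp
    have eq1: "of_int (int k) + 1 = (of_nat (Suc k) :: real)" by simp
    have eq2: "of_int (- int k) - 1 = (- of_nat (Suc k) :: real)" by simp
    show ?case using up[OF a, unfolded eq1] down[OF b, unfolded eq2] by (intro conjI)
  qed
  then have H1: "h (real k) = real k" and H2: "h (- real k) = - real k" for k by blast+
  show ?thesis
  proof (cases "n \<ge> 0")
    case True
    have e: "(of_int n :: real) = real (nat n)" using of_nat_nat[OF True] by (rule sym)
    show ?thesis unfolding e by (rule H1)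
  next
    case False
    then have "0 \<le> - n" by simp
    then have "real (nat (- n)) = of_int (- n)" by (rule of_nat_nat)
    then have e: "(of_int n :: real) = - real (nat (- n))" by simp
    show ?thesis unfolding e by (rule H2)
  qed
qed

lemma tau_good_iff:
  "sgood (tau A) 1 x \<longleftrightarrow> \<not> (x \<in> \<int> \<and> Lb A \<lfloor>x\<rfloor>)"
  "sgood (tau A) (-1) x \<longleftrightarrow> \<not> (x \<in> \<int> \<and> Rb A \<lfloor>x\<rfloor>)"
  by (rule tau_left_good_iff, rule tau_right_good_iff)

lemma incomp:
  assumes hs: "tau A homeomorphic_space subtopology (tau B) S"
  shows "A = B \<and> S = UNIV"
proof -
  obtain f where hm: "homeomorphic_map (tau A) (subtopology (tau B) S) f"
    using hs homeomorphic_space by blast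
  have conn1: "connectedin (tau A) {a..b}" for a b by (rule connectedin_tau) (rule is_interval_cc)
  obtain c where c: "c = 1 \<or> c = -1" and mono: "\<And>a b. a < b \<Longrightarrow> c * f a < c * f b"
    and ivS: "is_interval S" and rng: "range f = S"
    and tr: "\<And>s x. s = 1 \<or> s = -1 \<Longrightarrow> (sgood (tau A) s x \<longleftrightarrow> sgood (tau B) (s * c) (f x))"
    using transfer[OF topspace_tau tau_finer conn1 connected_tau hm] by metis
  have tr1: "sgood (tau A) 1 x \<longleftrightarrow> sgood (tau B) c (f x)" for x using tr[of 1 x] by simp
  have tr2: "sgood (tau A) (-1) x \<longleftrightarrow> sgood (tau B) (- c) (f x)" for x using tr[of "-1" x] by simp
  have bad_iff: "(\<not> sgood (tau A) 1 x \<or> \<not> sgood (tau A) (-1) x) \<longleftrightarrow>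
                 (\<not> sgood (tau B) 1 (f x) \<or> \<not> sgood (tau B) (-1) (f x))" for x
    using c tr1[of x] tr2[of x] by auto
  have both_iff2: "(\<not> sgood (tau A) 1 x \<and> \<not> sgood (tau A) (-1) x) \<longleftrightarrow>
                 (\<not> sgood (tau B) 1 (f x) \<and> \<not> sgood (tau B) (-1) (f x))" for x
    using c tr1[of x] tr2[of x] by auto
  have badT: "(\<not> sgood (tau C) 1 x \<or> \<not> sgood (tau C) (-1) x) \<longleftrightarrow> x \<in> \<int>" for C x
    using Lb_or_Rb[of C "\<lfloor>x\<rfloor>"] by (auto simp: tau_good_iff)
  have ints: "x \<in> \<int> \<longleftrightarrow> f x \<in> \<int>" for x using bad_iff[of x] badT by simp
  have bothT: "(\<not> sgood (tau C) 1 x \<and> \<not> sgood (tau C) (-1) x) \<longleftrightarrow> x = 0" for C x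
  proof -
    have "(\<not> sgood (tau C) 1 x \<and> \<not> sgood (tau C) (-1) x) \<longleftrightarrow> (x \<in> \<int> \<and> \<lfloor>x\<rfloor> = 0)"
      using both_iff[of C "\<lfloor>x\<rfloor>"] by (auto simp: tau_good_iff)
    also have "\<dots> \<longleftrightarrow> x = 0"
      by (auto elim: Ints_cases)
    finally show ?thesis .
  qed
  have f0: "f 0 = 0" using both_iff2[of 0] bothT by simp
  define h where "h t = c * f t" for t
  have cc: "c * c = 1" using c by auto
  have hfix: "h (of_int n) = of_int n" for n
  proof (rule int_fix)
    show "\<And>a b. a < b \<Longrightarrow> h a < h b" using mono by (simp add: h_def)
    show "h 0 = 0" using f0 by (simp add: h_def)
    show "t \<in> \<int> \<longleftrightarrow> h t \<in> \<int>" for t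
      using ints[of t] c by (auto simp: h_def)
    show "\<exists>y. z = h y" if "h a \<le> z" "z \<le> h b" for a b z
    proof -
      have "(f a \<le> c * z \<and> c * z \<le> f b) \<or> (f b \<le> c * z \<and> c * z \<le> f a)"
        using c that by (auto simp: h_def)
      then have "c * z \<in> S" using interval_mem[OF ivS, of "f a" "f b" "c * z"] rng by blast
      then obtain y where "c * z = f y" using rng by blast
      then have "z = h y" using cc by (auto simp: h_def) (metis mult.assoc mult_1)
      then show ?thesis by blast
    qed
  qed
  have c1: "c = 1"
  proof (rule ccontr)
    assume "c \<noteq> 1"
    then have cm: "c = -1" using c by simp
    have "f (-1) = 1" using hfix[of "-1"] cm by (simp add: h_def)
    have "\<not> sgood (tau A) 1 (of_int (-1))"
      using Lb_m1[of A] by (simp only: tau_good_iff floor_of_int Ints_of_int) simp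
    then have "\<not> sgood (tau A) 1 (-1)" by simp
    moreover have "sgood (tau B) (-1) (of_int 1)"
      using not_Rb1[of B] by (simp only: tau_good_iff floor_of_int) simp
    then have "sgood (tau B) (-1) 1" by simp
    ultimately show False using tr1[of "-1"] cm \<open>f (-1) = 1\<close> by simp
  qed
  have fint: "f (of_int n) = of_int n" for n using hfix[of n] c1 by (simp add: h_def)
  have AB: "A = B"
  proof (intro set_eqI)
    fix k :: nat
    have e: "(of_int (int k + 2) :: real) \<in> \<int>" by simp
    have "sgood (tau A) 1 (of_int (int k + 2)) \<longleftrightarrow> sgood (tau B) 1 (of_int (int k + 2))"
      using tr1[of "of_int (int k + 2)"] c1 fint[of "int k + 2"] by simp
    then have "Lb A (int k + 2) \<longleftrightarrow> Lb B (int k + 2)"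
      unfolding tau_good_iff floor_of_int using e by blast
    then show "k \<in> A \<longleftrightarrow> k \<in> B" by (simp add: Lb_code)
  qed
  have "S = UNIV"
  proof (intro set_eqI iffI)
    fix z :: real
    have "f (of_int \<lfloor>z\<rfloor>) \<in> S" "f (of_int (\<lfloor>z\<rfloor> + 1)) \<in> S" using rng by auto
    then have m: "of_int \<lfloor>z\<rfloor> \<in> S" "of_int (\<lfloor>z\<rfloor> + 1) \<in> S"
      using fint[of "\<lfloor>z\<rfloor>"] fint[of "\<lfloor>z\<rfloor> + 1"] by simp_all
    have "of_int \<lfloor>z\<rfloor> \<le> z" "z \<le> of_int (\<lfloor>z\<rfloor> + 1)" by linarith+
    then show "z \<in> S" using interval_mem[OF ivS m] by blast
  qed simp
  then show ?thesis using AB by simp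
qed

lemma tau_inj: "inj tau"
proof (rule injI)
  fix A B assume "tau A = tau B"
  then have "tau A homeomorphic_space subtopology (tau B) UNIV" by simp
  then show "A = B" using incomp by blast
qed

theorem corollary2:
  shows "\<exists>E :: real topology set.
           (\<forall>\<tau>\<in>E. finer_than_euclidean \<tau>) \<and>
           E \<approx> (UNIV :: real set) \<and>
           (\<forall>\<tau>\<in>E. connected_space \<tau> \<and> separable_space \<tau> \<and> completely_metrizable_space \<tau>) \<and>
           incomparable_family E (\<lambda>\<tau>. \<tau>)"
proof (intro exI[of _ "range tau"] conjI ballI)
  show "\<tau> \<in> range tau \<Longrightarrow> finer_than_euclidean \<tau>" for \<tau> using tau_finer by blast
  show "range tau \<approx> (UNIV :: real set)"
    using eqpoll_trans[OF inj_on_image_eqpoll_self[OF tau_inj] nat_sets_eqpoll_reals] .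
  show "\<tau> \<in> range tau \<Longrightarrow> connected_space \<tau>" for \<tau> using connected_tau by blast
  show "\<tau> \<in> range tau \<Longrightarrow> separable_space \<tau>" for \<tau> using separable_tau by blast
  show "\<tau> \<in> range tau \<Longrightarrow> completely_metrizable_space \<tau>" for \<tau> using cm_tau by blast
  show "incomparable_family (range tau) (\<lambda>\<tau>. \<tau>)"
    unfolding incomparable_family_def
  proof (intro ballI allI impI)
    fix i j S assume i: "i \<in> range tau" and j: "j \<in> range tau"
      and h: "S \<subseteq> topspace j \<and> i homeomorphic_space subtopology j S"
    obtain A where A: "i = tau A" using i by blast
    obtain B where B: "j = tau B" using j by blast
    have "A = B \<and> S = UNIV" using incomp h A B by blast
    then show "i = j \<and> S = topspace j" using A B by simp
  qed
qed


end
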